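(* Let $f:\Gamma\to\Gamma$ be an irreducible, expanding graph map with stacks $\mathcal{K}_1,\dots,\mathcal{K}_p$, where $\mathcal{K}_i$ has $n_i$ edges, and let $n=|\mathcal{E}\Gamma|$. Then the stack graph $\mathcal{SG}(f)$ is strongly connected, and for every $i$ the set of all vertices of $\mathcal{SG}(f)$ is contained in the directed ball $B_{n-n_i}(\mathcal{K}_i)$.
   Context: A graph $\Gamma$ is a finite 1-dimensional CW complex with a chosen orientation on each edge; $\mathcal{E}\Gamma$ is its set of edges, $\bar e$ is the reverse of $e$, $\iota,\tau$ the endpoints. An edge path is a nonempty concatenation $u=e_1\cdots e_k$ of oriented edges with $\tau(e_i)=\iota(e_{i+1})$; $|u|=k$ (no cancellation); $u$ traverses $e$ if $e$ or $\bar e$ occurs in it. A graph map $f:\Gamma\to\Gamma$ assigns to vertices vertices and to each oriented edge $e$ an edge path $f(e)$ with $\iota(f(e))=f(\iota(e))$, $f(\bar e)=\overline{f(e)}$; powers are compositions, applied to paths by concatenation without tightening. $T(f)$ has $(i,j)$ entry the number of times $f(e_i)$ traverses $e_j$; $f$ is irreducible if $T(f)$ is irreducible and every vertex has valence $\ge3$; expanding if $|f^n(e)|\to\infty$ for every edge. Stacks: $e$ is mixing if $|f(e)|>1$; surplus if non-mixing and $f(e)\in\{f(u),\overline{f(u)}\}$ for some edge $u\notin\{e,\bar e\}$. Stacks are the classes of the equivalence relation on $\mathcal{E}\Gamma$ (unoriented edges) generated by $e\sim f(e)$ for $e$ non-mixing and non-surplus. Each stack has the form $\mathcal{K}=\{e,f(e),\dots,f^s(e)\}$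 with only $f^s(e)$ mixing or surplus; $f^s(e)$ is the final edge of $\mathcal{K}$. Let $\alpha_i$ be the final edge of $\mathcal{K}_i$. The stack graph $\mathcal{SG}(f)$ is the directed graph with vertex set $\{\mathcal{K}_1,\dots,\mathcal{K}_p\}$ and a directed edge $[\mathcal{K}_i,\mathcal{K}_j]$ whenever $f(\alpha_i)$ contains an edge of $\mathcal{K}_j$; its length is $s([\mathcal{K}_i,\mathcal{K}_j])=\min\{s\ge1:f^s(\alpha_i)\text{ traverses }\alpha_j\}$. For a directed path $P=E_1\cdots E_k$ (edges traversed only in their positive direction), $s(P)=\sum s(E_i)$. The directed ball of size $d$ at $\mathcal{K}_i$ is $B_d(\mathcal{K}_i)=\{\mathcal{K}_j:\text{there is a directed path }P\text{ from }\mathcal{K}_i\text{ to }\mathcal{K}_j\text{ with }s(P)\le d\}$ (the empty path, of length $0$, is allowed, so $\mathcal{K}_i\in B_d(\mathcal{K}_i)$). Strongly connected means there is a directed path between any ordered pair of vertices. *)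

theory Defs
  imports Main
begin

(* An oriented edge is a pair (e, b) with
   b = True the chosen orientation of e and b = False its reverse \<bar>e. *)

type_synonym 'e oedge = "'e \<times> bool"

definition ostart :: "('e \<Rightarrow> 'v) \<Rightarrow> ('e \<Rightarrow> 'v) \<Rightarrow> 'e oedge \<Rightarrow> 'v" where
  "ostart src tgt x = (if snd x then src (fst x) else tgt (fst x))"

definition oend :: "('e \<Rightarrow> 'v) \<Rightarrow> ('e \<Rightarrow> 'v) \<Rightarrow> 'e oedge \<Rightarrow> 'v" where
  "oend src tgt x = (if snd x then tgt (fst x) else src (fst x))"

definition obar :: "'e oedge \<Rightarrow> 'e oedge" where
  "obar x = (fst x, \<not> snd x)"

definition prev :: "'e oedge list \<Rightarrow> 'e oedge list" where
  "prev u = rev (map obar u)"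

definition is_graph :: "'v set \<Rightarrow> 'e set \<Rightarrow> ('e \<Rightarrow> 'v) \<Rightarrow> ('e \<Rightarrow> 'v) \<Rightarrow> bool" where
  "is_graph V E src tgt \<longleftrightarrow> finite V \<and> finite E \<and> (\<forall>e\<in>E. src e \<in> V \<and> tgt e \<in> V)"

(* nonempty concatenation of oriented edges of the graph, no cancellation required *)
definition is_edge_path :: "'e set \<Rightarrow> ('e \<Rightarrow> 'v) \<Rightarrow> ('e \<Rightarrow> 'v) \<Rightarrow> 'e oedge list \<Rightarrow> bool" where
  "is_edge_path E src tgt u \<longleftrightarrow> u \<noteq> [] \<and> fst ` set u \<subseteq> E \<and>
     (\<forall>i. Suc i < length u \<longrightarrow> oend src tgt (u ! i) = ostart src tgt (u ! Suc i))"

(* A graph map is given by fv on vertices and fe on positively oriented edges;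
   on reversed edges it is defined by f(\<bar>e) = reverse of f(e) (see omap). *)
definition graph_map :: "'v set \<Rightarrow> 'e set \<Rightarrow> ('e \<Rightarrow> 'v) \<Rightarrow> ('e \<Rightarrow> 'v) \<Rightarrow>
    ('v \<Rightarrow> 'v) \<Rightarrow> ('e \<Rightarrow> 'e oedge list) \<Rightarrow> bool" where
  "graph_map V E src tgt fv fe \<longleftrightarrow> fv ` V \<subseteq> V \<and>
     (\<forall>e\<in>E. is_edge_path E src tgt (fe e) \<and>
        ostart src tgt (hd (fe e)) = fv (src e) \<and> oend src tgt (last (fe e)) = fv (tgt e))"

definition omap :: "('e \<Rightarrow> 'e oedge list) \<Rightarrow> 'e oedge \<Rightarrow> 'e oedge list" where
  "omap fe x = (if snd x then fe (fst x) else prev (fe (fst x)))"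

(* image of a path: concatenation, no tightening *)
definition pmap :: "('e \<Rightarrow> 'e oedge list) \<Rightarrow> 'e oedge list \<Rightarrow> 'e oedge list" where
  "pmap fe u = concat (map (omap fe) u)"

definition fpow :: "('e \<Rightarrow> 'e oedge list) \<Rightarrow> nat \<Rightarrow> 'e \<Rightarrow> 'e oedge list" where
  "fpow fe n e = (pmap fe ^^ n) [(e, True)]"

definition traverses :: "'e oedge list \<Rightarrow> 'e \<Rightarrow> bool" where
  "traverses u e \<longleftrightarrow> e \<in> fst ` set u"

definition trans_mat :: "('e \<Rightarrow> 'e oedge list) \<Rightarrow> 'e \<Rightarrow> 'e \<Rightarrow> nat" where
  "trans_mat fe i j = length (filter (\<lambda>x. fst x = j) (fe i))"

fun mat_pow :: "'e set \<Rightarrow> ('e \<Rightarrow> 'e \<Rightarrow> nat) \<Rightarrow> nat \<Rightarrow> 'e \<Rightarrow> 'e \<Rightarrow> nat" where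
  "mat_pow E T 0 = (\<lambda>i j. if i = j then 1 else 0)"
| "mat_pow E T (Suc k) = (\<lambda>i j. \<Sum>l\<in>E. mat_pow E T k i l * T l j)"

definition irreducible_mat :: "'e set \<Rightarrow> ('e \<Rightarrow> 'e \<Rightarrow> nat) \<Rightarrow> bool" where
  "irreducible_mat E T \<longleftrightarrow> (\<forall>i\<in>E. \<forall>j\<in>E. \<exists>k\<ge>1. mat_pow E T k i j > 0)"

(* valence: number of oriented edges starting at v (loops count twice) *)
definition valence :: "'e set \<Rightarrow> ('e \<Rightarrow> 'v) \<Rightarrow> ('e \<Rightarrow> 'v) \<Rightarrow> 'v \<Rightarrow> nat" where
  "valence E src tgt v = card {x. fst x \<in> E \<and> ostart src tgt x = v}"

definition irreducible_map :: "'v set \<Rightarrow> 'e set \<Rightarrow> ('e \<Rightarrow> 'v) \<Rightarrow> ('e \<Rightarrow> 'v) \<Rightarrow>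
    ('e \<Rightarrow> 'e oedge list) \<Rightarrow> bool" where
  "irreducible_map V E src tgt fe \<longleftrightarrow> irreducible_mat E (trans_mat fe) \<and>
     (\<forall>v\<in>V. valence E src tgt v \<ge> 3)"

definition expanding :: "'e set \<Rightarrow> ('e \<Rightarrow> 'e oedge list) \<Rightarrow> bool" where
  "expanding E fe \<longleftrightarrow> (\<forall>e\<in>E. filterlim (\<lambda>n. length (fpow fe n e)) at_top sequentially)"

definition mixing :: "('e \<Rightarrow> 'e oedge list) \<Rightarrow> 'e \<Rightarrow> bool" where
  "mixing fe e \<longleftrightarrow> length (fe e) > 1"

definition surplus :: "'e set \<Rightarrow> ('e \<Rightarrow> 'e oedge list) \<Rightarrow> 'e \<Rightarrow> bool" where
  "surplus E fe e \<longleftrightarrow> \<not> mixing fe e \<and>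
     (\<exists>u\<in>E. u \<noteq> e \<and> (fe e = fe u \<or> fe e = prev (fe u)))"

(* generating pairs e ~ f(e) (f(e) is then a single oriented edge; take its underlying edge) *)
definition stack_step :: "'e set \<Rightarrow> ('e \<Rightarrow> 'e oedge list) \<Rightarrow> ('e \<times> 'e) set" where
  "stack_step E fe = {(e, fst (hd (fe e))) | e. e \<in> E \<and> \<not> mixing fe e \<and> \<not> surplus E fe e}"

definition stack_rel :: "'e set \<Rightarrow> ('e \<Rightarrow> 'e oedge list) \<Rightarrow> ('e \<times> 'e) set" where
  "stack_rel E fe = (stack_step E fe \<union> (stack_step E fe)\<inverse>)\<^sup>*"

definition stacks :: "'e set \<Rightarrow> ('e \<Rightarrow> 'e oedge list) \<Rightarrow> 'e set set" where
  "stacks E fe = E // stack_rel E fe"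

definition final_edge :: "'e set \<Rightarrow> ('e \<Rightarrow> 'e oedge list) \<Rightarrow> 'e set \<Rightarrow> 'e" where
  "final_edge E fe K = (THE a. a \<in> K \<and> (mixing fe a \<or> surplus E fe a))"

definition sg_edge :: "'e set \<Rightarrow> ('e \<Rightarrow> 'e oedge list) \<Rightarrow> 'e set \<Rightarrow> 'e set \<Rightarrow> bool" where
  "sg_edge E fe K K' \<longleftrightarrow> K \<in> stacks E fe \<and> K' \<in> stacks E fe \<and>
     (\<exists>x\<in>set (fe (final_edge E fe K)). fst x \<in> K')"

definition sg_len :: "'e set \<Rightarrow> ('e \<Rightarrow> 'e oedge list) \<Rightarrow> 'e set \<Rightarrow> 'e set \<Rightarrow> nat" where
  "sg_len E fe K K' =
     (LEAST s. s \<ge> 1 \<and> traverses (fpow fe s (final_edge E fe K)) (final_edge E fe K'))"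

(* directed path given by its list of visited vertices K_0, ..., K_k (k = 0: empty path) *)
definition sg_path :: "'e set \<Rightarrow> ('e \<Rightarrow> 'e oedge list) \<Rightarrow> 'e set list \<Rightarrow> bool" where
  "sg_path E fe ps \<longleftrightarrow> ps \<noteq> [] \<and> set ps \<subseteq> stacks E fe \<and>
     (\<forall>i. Suc i < length ps \<longrightarrow> sg_edge E fe (ps ! i) (ps ! Suc i))"

definition sg_path_len :: "'e set \<Rightarrow> ('e \<Rightarrow> 'e oedge list) \<Rightarrow> 'e set list \<Rightarrow> nat" where
  "sg_path_len E fe ps = sum_list (map (\<lambda>(K, K'). sg_len E fe K K') (zip ps (tl ps)))"

definition dball :: "'e set \<Rightarrow> ('e \<Rightarrow> 'e oedge list) \<Rightarrow> nat \<Rightarrow> 'e set \<Rightarrow> 'e set set" where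
  "dball E fe d K = {K'. \<exists>ps. sg_path E fe ps \<and> hd ps = K \<and> last ps = K' \<and> sg_path_len E fe ps \<le> d}"

definition sg_strongly_connected :: "'e set \<Rightarrow> ('e \<Rightarrow> 'e oedge list) \<Rightarrow> bool" where
  "sg_strongly_connected E fe \<longleftrightarrow>
     (\<forall>K\<in>stacks E fe. \<forall>K'\<in>stacks E fe. \<exists>ps. sg_path E fe ps \<and> hd ps = K \<and> last ps = K')"

end

theory Submission
  imports Defs
begin

lemma fst_set_prev: "fst ` set (prev u) = fst ` set u"
  by (force simp: prev_def obar_def image_iff)

lemma fst_set_omap: "fst ` set (omap fe x) = fst ` set (fe (fst x))"
  by (simp add: omap_def fst_set_prev)

locale stk =
  fixes E :: "'e set" and fe :: "'e \<Rightarrow> 'e oedge list"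
  assumes finE: "finite E"
    and fe_ne: "\<And>e. e \<in> E \<Longrightarrow> fe e \<noteq> []"
    and fe_E: "\<And>e. e \<in> E \<Longrightarrow> fst ` set (fe e) \<subseteq> E"
    and irr: "\<forall>i\<in>E. \<forall>j\<in>E. \<exists>k\<ge>1. mat_pow E (trans_mat fe) k i j > 0"
    and exp: "expanding E fe"
begin

definition "N = {e\<in>E. \<not> mixing fe e \<and> \<not> surplus E fe e}"
definition "g e = fst (hd (fe e))"
definition "A = {(x,y). y \<in> fst ` set (fe x)}"

lemma N_E: "x \<in> N \<Longrightarrow> x \<in> E" by (simp add: N_def)

lemma N_fe: "x \<in> N \<Longrightarrow> fe x = [hd (fe x)]"
proof -
  assume "x \<in> N"
  then have "x \<in> E" "length (fe x) \<le> 1" by (auto simp: N_def mixing_def)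
  then have "fe x \<noteq> []" "length (fe x) \<le> 1" using fe_ne by auto
  then show ?thesis by (cases "fe x") auto
qed

lemma g_E: "x \<in> N \<Longrightarrow> g x \<in> E"
proof -
  assume x: "x \<in> N"
  then have "fe x \<noteq> []" using fe_ne N_E by blast
  then have "fst (hd (fe x)) \<in> fst ` set (fe x)" by simp
  then show ?thesis using fe_E[OF N_E[OF x]] unfolding g_def by blast
qed

lemma A_N: "x \<in> N \<Longrightarrow> (x, y) \<in> A \<longleftrightarrow> y = g x"
proof -
  assume "x \<in> N"
  then obtain c where c: "fe x = [c]" using N_fe by blast
  then have "fst ` set (fe x) = {g x}" unfolding g_def by simp
  then show ?thesis unfolding A_def by simp
qed

lemma fst_set_pmap: "fst ` set (pmap fe u) = {y. \<exists>x\<in>fst ` set u. (x,y) \<in> A}"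
  by (auto simp: pmap_def A_def fst_set_omap[symmetric] image_UN) 

lemma fst_set_pow: "fst ` set ((pmap fe ^^ m) u) = {z. \<exists>y\<in>fst ` set u. (y,z) \<in> A ^^ m}"
proof (induction m arbitrary: u)
  case 0
  then show ?case by auto
next
  case (Suc m)
  have *: "(pmap fe ^^ Suc m) u = (pmap fe ^^ m) (pmap fe u)" by (simp only: funpow_Suc_right o_apply)
  have eq: "fst ` set ((pmap fe ^^ Suc m) u) = {z. \<exists>y\<in>fst ` set (pmap fe u). (y,z) \<in> A ^^ m}"
    unfolding * by (rule Suc.IH)
  show ?case unfolding eq
  proof (intro set_eqI iffI)
    fix z assume "z \<in> {z. \<exists>y\<in>fst ` set (pmap fe u). (y,z) \<in> A ^^ m}"
    then obtain y where y: "y \<in> fst ` set (pmap fe u)" "(y,z) \<in> A ^^ m"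
      by blast
    have "y \<in> {y. \<exists>x\<in>fst ` set u. (x,y) \<in> A}" using y(1) fst_set_pmap[of u] by simp
    then obtain x where "x \<in> fst ` set u" "(x,y) \<in> A" by blast
    then show "z \<in> {z. \<exists>y\<in>fst ` set u. (y,z) \<in> A ^^ Suc m}" using y(2) relpow_Suc_I2 by fast
  next
    fix z assume "z \<in> {z. \<exists>y\<in>fst ` set u. (y,z) \<in> A ^^ Suc m}"
    then obtain x where x: "x \<in> fst ` set u" "(x,z) \<in> A ^^ Suc m" by blast
    then obtain y where "(x,y) \<in> A" "(y,z) \<in> A ^^ m" using relpow_Suc_D2 by metis
    then have "y \<in> {y. \<exists>x\<in>fst ` set u. (x,y) \<in> A}" using x(1) by blast
    then have "y \<in> fst ` set (pmap fe u)" using fst_set_pmap[of u] by simp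
    then show "z \<in> {z. \<exists>y\<in>fst ` set (pmap fe u). (y,z) \<in> A ^^ m}"
      using \<open>(y,z) \<in> A ^^ m\<close> by blast
  qed
qed

lemma traverses_fpow: "traverses (fpow fe m a) b \<longleftrightarrow> (a,b) \<in> A ^^ m"
  by (simp add: traverses_def fpow_def fst_set_pow)

lemma len1: "(\<forall>j. (g ^^ j) y \<in> N) \<Longrightarrow> length ((pmap fe ^^ m) [(y,b)]) = 1"
proof (induction m arbitrary: y b)
  case 0
  then show ?case by simp
next
  case (Suc m)
  have yN: "y \<in> N" using Suc.prems[rule_format, of 0] by simp
  obtain b' where pb: "pmap fe [(y,b)] = [(g y, b')]"
    using N_fe[OF yN] unfolding pmap_def omap_def prev_def obar_def g_def
  proof -
    obtain c where c: "fe y = [c]" using N_fe[OF yN] by blast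
    have "fst c = g y" using c by (simp add: g_def)
    then show ?thesis using c that[of "if b then snd c else \<not> snd c"]
      by (cases c) (auto simp: pmap_def omap_def prev_def obar_def)
  qed
  have "\<forall>j. (g ^^ j) (g y) \<in> N" proof
    fix j show "(g ^^ j) (g y) \<in> N" using Suc.prems[rule_format, of "Suc j"] by (simp only: funpow_Suc_right o_apply)
  qed
  moreover have "(pmap fe ^^ Suc m) [(y,b)] = (pmap fe ^^ m) (pmap fe [(y,b)])" by (simp only: funpow_Suc_right o_apply)
  ultimately show ?case using Suc.IH[of "g y" b'] pb by simp
qed

lemma ex_exit: "y \<in> E \<Longrightarrow> \<exists>m. (g ^^ m) y \<notin> N"
proof (rule ccontr)
  assume yE: "y \<in> E" and "\<not> (\<exists>m. (g ^^ m) y \<notin> N)"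
  then have "\<forall>j. (g ^^ j) y \<in> N" by blast
  then have c: "\<And>n. length (fpow fe n y) = 1" using len1 by (simp add: fpow_def)
  from exp yE have "filterlim (\<lambda>n. length (fpow fe n y)) at_top sequentially"
    by (simp add: expanding_def)
  then have "\<forall>\<^sub>F n in sequentially. 2 \<le> length (fpow fe n y)"
    by (simp add: filterlim_at_top)
  then show False by (simp add: c)
qed


definition "mm x = (LEAST m. (g ^^ m) x \<notin> N)"
definition "t x = (g ^^ mm x) x"
definition "cls x = {y\<in>E. t y = t x}"

lemma mm_exit: "x \<in> E \<Longrightarrow> (g ^^ mm x) x \<notin> N"
  unfolding mm_def by (rule LeastI_ex[OF ex_exit])

lemma mm_before: "j < mm x \<Longrightarrow> (g ^^ j) x \<in> N"
  unfolding mm_def using not_less_Least by blast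

lemma iter_E: "x \<in> E \<Longrightarrow> j \<le> mm x \<Longrightarrow> (g ^^ j) x \<in> E"
proof (induction j)
  case 0 then show ?case by simp
next
  case (Suc j)
  then have "(g ^^ j) x \<in> N" using mm_before by simp
  then show ?case using g_E by simp
qed

lemma t_E: "x \<in> E \<Longrightarrow> t x \<in> E" unfolding t_def using iter_E by simp
lemma t_notN: "x \<in> E \<Longrightarrow> t x \<notin> N" unfolding t_def using mm_exit by simp

lemma t_fix: "a \<in> E \<Longrightarrow> a \<notin> N \<Longrightarrow> t a = a"
proof -
  assume "a \<notin> N"
  then have "mm a = 0" unfolding mm_def by (intro Least_eq_0) simp
  then show ?thesis by (simp add: t_def)
qed

lemma t_g: "x \<in> N \<Longrightarrow> t (g x) = t x"
proof -
  assume xN: "x \<in> N"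
  have gE: "g x \<in> E" using g_E xN by blast
  define k where "k = mm (g x)"
  have fs: "\<And>j. (g ^^ Suc j) x = (g ^^ j) (g x)" by (simp only: funpow_Suc_right o_apply)
  have "mm x = Suc k" unfolding mm_def
  proof (rule Least_equality)
    show "(g ^^ Suc k) x \<notin> N" using mm_exit[OF gE] fs k_def by simp
  next
    fix y assume y: "(g ^^ y) x \<notin> N"
    show "Suc k \<le> y"
    proof (cases y)
      case 0 then show ?thesis using y xN by simp
    next
      case (Suc y')
      then have "(g ^^ y') (g x) \<notin> N" using y fs by simp
      then have "k \<le> y'" unfolding k_def mm_def by (rule Least_le)
      then show ?thesis using Suc by simp
    qed
  qed
  then show ?thesis unfolding t_def using fs k_def by simp
qed

lemma iter_t: "x \<in> E \<Longrightarrow> j \<le> mm x \<Longrightarrow> t ((g ^^ j) x) = t x"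
proof (induction j)
  case 0 then show ?case by simp
next
  case (Suc j)
  then have "(g ^^ j) x \<in> N" using mm_before by simp
  then show ?case using t_g Suc by simp
qed

lemma t_t: "x \<in> E \<Longrightarrow> t (t x) = t x"
  using t_fix t_E t_notN by blast

lemma A_iter: "x \<in> E \<Longrightarrow> j \<le> mm x \<Longrightarrow> (x, (g ^^ j) x) \<in> A ^^ j"
proof (induction j)
  case 0 then show ?case by simp
next
  case (Suc j)
  then have N1: "(g ^^ j) x \<in> N" using mm_before by simp
  have "((g ^^ j) x, g ((g ^^ j) x)) \<in> A" using A_N[OF N1] by simp
  then show ?case using Suc relpow_Suc_I by (metis Suc_leD funpow.simps(2) o_apply)
qed

lemma iter_inj: "x \<in> E \<Longrightarrow> inj_on (\<lambda>k. (g ^^ k) x) {0..mm x}"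
proof (rule inj_onI, rule ccontr)
  fix i j assume xE: "x \<in> E" and i: "i \<in> {0..mm x}" and j: "j \<in> {0..mm x}"
    and eq: "(g ^^ i) x = (g ^^ j) x" and ne: "i \<noteq> j"
  have key: "\<And>i j. i < j \<Longrightarrow> j \<le> mm x \<Longrightarrow> (g ^^ i) x = (g ^^ j) x \<Longrightarrow> False"
  proof -
    fix i j assume ij: "i < j" "j \<le> mm x" and e: "(g ^^ i) x = (g ^^ j) x"
    have "mm x - (j - i) = (mm x - j) + i" using ij by simp
    then have "(g ^^ (mm x - (j - i))) x = (g ^^ (mm x - j)) ((g ^^ i) x)"
      by (simp only: funpow_add o_apply)
    also have "\<dots> = (g ^^ (mm x - j)) ((g ^^ j) x)" using e by simp
    also have "\<dots> = (g ^^ ((mm x - j) + j)) x" by (simp only: funpow_add o_apply)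
    also have "\<dots> = (g ^^ mm x) x" using ij by simp
    finally have "(g ^^ (mm x - (j - i))) x \<notin> N" using mm_exit[OF xE] by simp
    moreover have "(g ^^ (mm x - (j - i))) x \<in> N" using ij by (intro mm_before) simp
    ultimately show False by simp
  qed
  show False
  proof (cases "i < j")
    case True then show ?thesis using key j eq by simp
  next
    case False then show ?thesis using key[of j i] i eq ne by simp
  qed
qed

lemma cls_fin: "finite (cls x)" unfolding cls_def using finE by simp

lemma card_bound: "x \<in> E \<Longrightarrow> Suc (mm x) \<le> card (cls x)"
proof -
  assume xE: "x \<in> E"
  have "(\<lambda>k. (g ^^ k) x) ` {0..mm x} \<subseteq> cls x"
    unfolding cls_def using iter_E[OF xE] iter_t[OF xE] by auto
  then have "card ((\<lambda>k. (g ^^ k) x) ` {0..mm x}) \<le> card (cls x)"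
    using cls_fin by (rule card_mono[rotated])
  then show ?thesis using card_image[OF iter_inj[OF xE]] by simp
qed


lemma step_char: "stack_step E fe = {(e, g e) | e. e \<in> N}"
  unfolding stack_step_def N_def g_def by blast

lemma S_star_t: "x \<in> E \<Longrightarrow> (x, t x) \<in> (stack_step E fe)\<^sup>*"
proof -
  assume xE: "x \<in> E"
  have "\<And>j. j \<le> mm x \<Longrightarrow> (x, (g ^^ j) x) \<in> (stack_step E fe)\<^sup>*"
  proof -
    fix j show "j \<le> mm x \<Longrightarrow> (x, (g ^^ j) x) \<in> (stack_step E fe)\<^sup>*"
    proof (induction j)
      case 0 then show ?case by simp
    next
      case (Suc j)
      then have "(g ^^ j) x \<in> N" using mm_before by simp
      then have "((g ^^ j) x, g ((g ^^ j) x)) \<in> stack_step E fe" unfolding step_char by blast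
      then show ?case using Suc by (simp add: rtrancl.rtrancl_into_rtrancl)
    qed
  qed
  then show ?thesis unfolding t_def by simp
qed

lemma rel_char: "x \<in> E \<Longrightarrow> (x, y) \<in> stack_rel E fe \<longleftrightarrow> y \<in> E \<and> t y = t x"
proof
  assume xE: "x \<in> E" and "(x, y) \<in> stack_rel E fe"
  then have "(x, y) \<in> (stack_step E fe \<union> (stack_step E fe)\<inverse>)\<^sup>*" by (simp add: stack_rel_def)
  then show "y \<in> E \<and> t y = t x"
  proof (induction rule: rtrancl_induct)
    case base then show ?case using xE by simp
  next
    case (step y z)
    then consider "y \<in> N" "z = g y" | "z \<in> N" "y = g z" unfolding step_char by blast
    then show ?case
    proof cases
      case 1 then show ?thesis using step t_g g_E by simp
    next
      case 2 then show ?thesis using step t_g N_E by simp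
    qed
  qed
next
  assume xE: "x \<in> E" and yy: "y \<in> E \<and> t y = t x"
  let ?S = "stack_step E fe"
  have "(x, t x) \<in> (?S \<union> ?S\<inverse>)\<^sup>*" using S_star_t[OF xE] by (rule rtrancl_mono[THEN subsetD, rotated]) blast
  moreover have "(y, t y) \<in> ?S\<^sup>*" using S_star_t yy by blast
  then have "(t y, y) \<in> (?S\<inverse>)\<^sup>*" by (simp add: rtrancl_converse)
  then have "(t y, y) \<in> (?S \<union> ?S\<inverse>)\<^sup>*" by (rule rtrancl_mono[THEN subsetD, rotated]) blast
  ultimately show "(x, y) \<in> stack_rel E fe" using yy unfolding stack_rel_def by simp
qed

lemma img_cls: "x \<in> E \<Longrightarrow> stack_rel E fe `` {x} = cls x"
  unfolding cls_def using rel_char by blast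

lemma stacks_char: "stacks E fe = cls ` E"
  unfolding stacks_def quotient_def using img_cls by auto

lemma x_in_cls: "x \<in> E \<Longrightarrow> x \<in> cls x" unfolding cls_def by simp

lemma final_cls: "x \<in> E \<Longrightarrow> final_edge E fe (cls x) = t x"
  unfolding final_edge_def
proof (rule the_equality)
  assume xE: "x \<in> E"
  show "t x \<in> cls x \<and> (mixing fe (t x) \<or> surplus E fe (t x))"
    using t_E[OF xE] t_t[OF xE] t_notN[OF xE] unfolding cls_def N_def by auto
  fix a assume "a \<in> cls x \<and> (mixing fe a \<or> surplus E fe a)"
  then have "a \<in> E" "t a = t x" "a \<notin> N" unfolding cls_def N_def by auto
  then show "a = t x" using t_fix by simp
qed

lemma cls_eq: "t y = t x \<Longrightarrow> cls y = cls x" unfolding cls_def by simp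

lemma sg_len_bound: "sg_edge E fe K K' \<Longrightarrow> sg_len E fe K K' \<le> card K'"
proof -
  assume h: "sg_edge E fe K K'"
  then obtain x x' where xE: "x \<in> E" and K: "K = cls x" and x'E: "x' \<in> E" and K': "K' = cls x'"
    unfolding sg_edge_def stacks_char by blast
  from h obtain z where z: "z \<in> set (fe (t x))" "fst z \<in> K'"
    unfolding sg_edge_def K final_cls[OF xE] by blast
  define y where "y = fst z"
  have yE: "y \<in> E" and ty: "t y = t x'" using z K' unfolding y_def cls_def by auto
  have "(t x, y) \<in> A" using z unfolding A_def y_def by auto
  moreover have "(y, t y) \<in> A ^^ mm y" using A_iter[OF yE] unfolding t_def by simp
  ultimately have "(t x, t y) \<in> A ^^ Suc (mm y)" by (rule relpow_Suc_I2)
  then have "traverses (fpow fe (Suc (mm y)) (final_edge E fe K)) (final_edge E fe K')"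
    unfolding traverses_fpow K K' final_cls[OF xE] final_cls[OF x'E] ty by simp
  then have "sg_len E fe K K' \<le> Suc (mm y)" unfolding sg_len_def by (intro Least_le) simp
  also have "\<dots> \<le> card (cls y)" using card_bound[OF yE] .
  also have "cls y = K'" using cls_eq[OF ty] K' by simp
  finally show ?thesis .
qed


lemma mat_pos: "i \<in> E \<Longrightarrow> mat_pow E (trans_mat fe) k i j > 0 \<Longrightarrow> (i, j) \<in> (A \<inter> E \<times> UNIV) ^^ k"
proof (induction k arbitrary: j)
  case 0 then show ?case by (simp split: if_splits)
next
  case (Suc k)
  have "0 < (\<Sum>l\<in>E. mat_pow E (trans_mat fe) k i l * trans_mat fe l j)" using Suc.prems by simp
  then have "\<exists>l\<in>E. 0 < mat_pow E (trans_mat fe) k i l * trans_mat fe l j"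
  proof (rule contrapos_pp)
    assume "\<not> (\<exists>l\<in>E. 0 < mat_pow E (trans_mat fe) k i l * trans_mat fe l j)"
    then have "\<forall>l\<in>E. mat_pow E (trans_mat fe) k i l * trans_mat fe l j = 0" using gr0I by blast
    then have "(\<Sum>l\<in>E. mat_pow E (trans_mat fe) k i l * trans_mat fe l j) = 0" by (intro sum.neutral) blast
    then show "\<not> 0 < (\<Sum>l\<in>E. mat_pow E (trans_mat fe) k i l * trans_mat fe l j)" by simp
  qed
  then obtain l where l: "l \<in> E" "0 < mat_pow E (trans_mat fe) k i l * trans_mat fe l j" by blast
  then have "0 < mat_pow E (trans_mat fe) k i l" "0 < trans_mat fe l j" by auto
  then have il: "(i, l) \<in> (A \<inter> E \<times> UNIV) ^^ k" and "filter (\<lambda>x. fst x = j) (fe l) \<noteq> []"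
    using Suc.IH Suc.prems(1) unfolding trans_mat_def by auto
  then obtain x where x: "x \<in> set (fe l)" "fst x = j" by (auto simp: filter_empty_conv)
  then have "j \<in> fst ` set (fe l)" by (metis image_eqI)
  then have "(l, j) \<in> A \<inter> E \<times> UNIV" using l(1) unfolding A_def by simp
  then show ?case using il by (rule relpow_Suc_I[rotated])
qed

lemma reach: "K \<in> stacks E fe \<Longrightarrow> K' \<in> stacks E fe \<Longrightarrow> (K, K') \<in> {(a, b). sg_edge E fe a b}\<^sup>*"
proof -
  assume "K \<in> stacks E fe" "K' \<in> stacks E fe"
  then obtain x x' where xE: "x \<in> E" and K: "K = cls x" and x'E: "x' \<in> E" and K': "K' = cls x'"
    unfolding stacks_char by blast
  let ?R = "{(a, b). sg_edge E fe a b}"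
  have "\<exists>k\<ge>1. mat_pow E (trans_mat fe) k (t x) (t x') > 0"
    using irr t_E[OF xE] t_E[OF x'E] by simp
  then obtain k where "mat_pow E (trans_mat fe) k (t x) (t x') > 0" by blast
  then have "(t x, t x') \<in> (A \<inter> E \<times> UNIV) ^^ k" by (rule mat_pos[OF t_E[OF xE]])
  then have "(t x, t x') \<in> (A \<inter> E \<times> UNIV)\<^sup>*" by (rule relpow_imp_rtrancl)
  moreover have "\<And>b. (t x, b) \<in> (A \<inter> E \<times> UNIV)\<^sup>* \<Longrightarrow> (cls (t x), cls b) \<in> ?R\<^sup>* \<and> b \<in> E"
  proof -
    fix b assume "(t x, b) \<in> (A \<inter> E \<times> UNIV)\<^sup>*"
    then show "(cls (t x), cls b) \<in> ?R\<^sup>* \<and> b \<in> E"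
  proof (induction rule: rtrancl_induct)
    case base then show ?case using t_E[OF xE] by simp
  next
    case (step w w')
    then have wE: "w \<in> E" and ww: "(w, w') \<in> A" by auto
    then have "w' \<in> fst ` set (fe w)" unfolding A_def by simp
    then have w'E: "w' \<in> E" using fe_E[OF wE] by blast
    show ?case
    proof (cases "w \<in> N")
      case True
      then have "w' = g w" using A_N ww by blast
      then have "t w' = t w" using t_g[OF True] by simp
      then have "cls w' = cls w" by (rule cls_eq)
      then show ?thesis using step w'E by simp
    next
      case False
      then have tw: "t w = w" using t_fix wE by simp
      obtain z where z: "z \<in> set (fe w)" "fst z = w'" using ww unfolding A_def by auto
      have "cls w \<in> cls ` E" "cls w' \<in> cls ` E" using wE w'E by auto
      moreover have "fst z \<in> cls w'" using z x_in_cls[OF w'E] by simp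
      ultimately have "sg_edge E fe (cls w) (cls w')"
        unfolding sg_edge_def stacks_char final_cls[OF wE] tw using z(1) by blast
      then have "(cls w, cls w') \<in> ?R" by simp
      moreover have "(cls (t x), cls w) \<in> ?R\<^sup>*" using step by blast
      ultimately show ?thesis using w'E by (meson rtrancl.rtrancl_into_rtrancl)
    qed
  qed
  qed
  ultimately have "(cls (t x), cls (t x')) \<in> ?R\<^sup>*" by blast
  moreover have "cls (t x) = K" using K cls_eq[OF t_t[OF xE]] by simp
  moreover have "cls (t x') = K'" using K' cls_eq[OF t_t[OF x'E]] by simp
  ultimately show ?thesis by simp
qed


lemma sum_stacks: "sum card (stacks E fe) = card E"
proof -
  have U: "\<Union> (stacks E fe) = E" unfolding stacks_char cls_def using x_in_cls unfolding cls_def by blast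
  have "pairwise disjnt (stacks E fe)"
    unfolding stacks_char pairwise_def disjnt_def cls_def by auto
  then have "card (\<Union> (stacks E fe)) = sum card (stacks E fe)"
    by (rule card_Union_disjoint) (auto simp: stacks_char cls_fin)
  then show ?thesis using U by simp
qed

lemma fin_stacks: "finite (stacks E fe)" unfolding stacks_char using finE by simp

end

lemma dpath: "(a, b) \<in> R\<^sup>* \<Longrightarrow> \<exists>ps. ps \<noteq> [] \<and> hd ps = a \<and> last ps = b \<and> distinct ps \<and> successively (\<lambda>x y. (x, y) \<in> R) ps"
proof (induction rule: rtrancl_induct)
  case base
  then show ?case by (intro exI[of _ "[a]"]) simp
next
  case (step y z)
  then obtain ps where ps: "ps \<noteq> []" "hd ps = a" "last ps = y" "distinct ps" "successively (\<lambda>x y. (x, y) \<in> R) ps"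
    by blast
  show ?case
  proof (cases "z \<in> set ps")
    case True
    then obtain xs ys where xs: "ps = xs @ z # ys" by (metis split_list)
    have "hd (xs @ [z]) = a" using ps(2) xs by (cases xs) auto
    moreover have "distinct (xs @ [z])" using ps(4) xs by simp
    moreover have "successively (\<lambda>x y. (x, y) \<in> R) (xs @ [z])"
      using ps(5) unfolding xs using successively_append_iff[of _ "xs @ [z]" ys] by simp
    ultimately show ?thesis by (intro exI[of _ "xs @ [z]"]) simp
  next
    case False
    have "successively (\<lambda>x y. (x, y) \<in> R) (ps @ [z])"
      using ps(1,3,5) step(2) by (simp add: successively_append_iff)
    then show ?thesis using ps False by (intro exI[of _ "ps @ [z]"]) simp
  qed
qed

lemma path_sum_bound:
  assumes "successively P ps" "\<And>a b. P a b \<Longrightarrow> h a b \<le> (c b :: nat)"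
  shows "sum_list (map (\<lambda>(a, b). h a b) (zip ps (tl ps))) \<le> sum_list (map c (tl ps))"
  using assms(1)
proof (induction ps)
  case Nil then show ?case by simp
next
  case (Cons x xs)
  show ?case
  proof (cases xs)
    case Nil then show ?thesis by simp
  next
    case (Cons y ys)
    then have "P x y" "successively P xs" using Cons.prems by auto
    then have "h x y \<le> c y" "sum_list (map (\<lambda>(a, b). h a b) (zip xs (tl xs))) \<le> sum_list (map c (tl xs))"
      using assms(2) Cons.IH by auto
    then show ?thesis using Cons by simp
  qed
qed

lemma path_set:
  assumes "successively P ps" "\<And>a b. P a b \<Longrightarrow> b \<in> S" "ps \<noteq> []" "hd ps \<in> S"
  shows "set ps \<subseteq> S"
  using assms(1,3,4)
proof (induction ps)
  case Nil then show ?case by simp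
next
  case (Cons x xs)
  show ?case
  proof (cases xs)
    case Nil then show ?thesis using Cons by simp
  next
    case (Cons y ys)
    note c = this
    have xS: "x \<in> S" using Cons.prems(3) by simp
    have "P x y" "successively P xs" using Cons.prems(1) c by auto
    then have "hd xs \<in> S" using assms(2) c by simp
    then have "set xs \<subseteq> S" using Cons.IH \<open>successively P xs\<close> c by simp
    then show ?thesis using xS by simp
  qed
qed

theorem lemma4p6:
  fixes V :: "'v set" and E :: "'e set" and src tgt :: "'e \<Rightarrow> 'v"
    and fv :: "'v \<Rightarrow> 'v" and fe :: "'e \<Rightarrow> 'e oedge list"
  assumes "is_graph V E src tgt"
    and "graph_map V E src tgt fv fe"
    and "irreducible_map V E src tgt fe"
    and "expanding E fe"
  shows "sg_strongly_connected E fe \<and>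
         (\<forall>K\<in>stacks E fe. stacks E fe \<subseteq> dball E fe (card E - card K) K)"
proof -
  interpret stk E fe
  proof
    show "finite E" using assms(1) by (simp add: is_graph_def)
    show "\<And>e. e \<in> E \<Longrightarrow> fe e \<noteq> []" using assms(2) by (simp add: graph_map_def is_edge_path_def)
    show "\<And>e. e \<in> E \<Longrightarrow> fst ` set (fe e) \<subseteq> E" using assms(2) by (simp add: graph_map_def is_edge_path_def)
    show "\<forall>i\<in>E. \<forall>j\<in>E. \<exists>k\<ge>1. mat_pow E (trans_mat fe) k i j > 0"
      using assms(3) by (simp add: irreducible_map_def irreducible_mat_def)
    show "expanding E fe" by (rule assms(4))
  qed
  let ?R = "{(a, b). sg_edge E fe a b}"
  have main: "\<exists>ps. sg_path E fe ps \<and> hd ps = K \<and> last ps = K' \<and> sg_path_len E fe ps \<le> card E - card K"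
    if K: "K \<in> stacks E fe" and K': "K' \<in> stacks E fe" for K K'
  proof -
    obtain ps where ps: "ps \<noteq> []" "hd ps = K" "last ps = K'" "distinct ps"
      and sc: "successively (\<lambda>x y. (x, y) \<in> ?R) ps"
      using dpath[OF reach[OF K K']] by blast
    have sc': "successively (sg_edge E fe) ps" using sc by simp
    have setps: "set ps \<subseteq> stacks E fe"
      by (rule path_set[OF sc']) (auto simp: sg_edge_def ps K)
    have sp: "sg_path E fe ps" unfolding sg_path_def using ps(1) setps sc' by (simp add: successively_conv_nth)
    have "sg_path_len E fe ps \<le> sum_list (map card (tl ps))"
      unfolding sg_path_len_def by (rule path_sum_bound[OF sc']) (rule sg_len_bound)
    also have "\<dots> = sum card (set (tl ps))" using ps(4) by (simp add: sum_list_distinct_conv_sum_set distinct_tl)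
    also have "\<dots> \<le> sum card (stacks E fe - {K})"
    proof (rule sum_mono2)
      show "finite (stacks E fe - {K})" using fin_stacks by simp
      have "ps = K # tl ps" using ps(1,2) by (cases ps) auto
      then have "K \<notin> set (tl ps)" "set (tl ps) \<subseteq> set ps" using ps(4) by (metis distinct.simps(2), metis set_subset_Cons)
      then show "set (tl ps) \<subseteq> stacks E fe - {K}" using setps by blast
    qed simp
    also have "\<dots> = card E - card K" using sum_stacks K fin_stacks by (simp add: sum_diff1_nat)
    finally show ?thesis using sp ps by blast
  qed
  show ?thesis
    unfolding sg_strongly_connected_def dball_def using main by blast
qed

end
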